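(* Let $\phi=\phi_{\mathrm{NH}}$, $\phi_{\mathrm{NH}}(y,t)=t^{-1/2}\exp(y^2/(2t))$, and $\Phi(\boldsymbol x,t)=\sum_{i=1}^N\phi(x_i,t)$. Let $B>0$, $\boldsymbol x\in[0,\infty)^N$, $t>0$, $\boldsymbol p\in\Delta^{N-1}$ with $p_i\propto\partial_x\phi(x_i,t)$ (arbitrary if all these vanish), $\boldsymbol\ell\in\mathbb{R}^N$ with $\max_{i,i'}|\ell_i-\ell_{i'}|\le B$, $\Delta x_i=\langle\boldsymbol p,\boldsymbol\ell\rangle-\ell_i$, and let $\Delta t\ge0$ be such that $\Phi(\boldsymbol x+\Delta\boldsymbol x,t+\Delta t)=\Phi(\boldsymbol x,t)$. If $K>0$ is such that $\max_{i\in[N]}x_i^2/t\le K$, then $$t\ge256e^2B^2\max\{K,1\}\implies\Delta t\le2eB^2.$$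
   Context: $\Delta^{N-1}$ is the probability simplex in $\mathbb{R}^N$. *)

theory Defs
  imports "HOL-Analysis.Analysis"
begin

definition phiNH :: "real \<Rightarrow> real \<Rightarrow> real" where
  "phiNH y t = t powr (-1/2) * exp (y^2 / (2 * t))"

text \<open>Phi(x,t) = sum_{i<N} phi(x_i,t); vectors in R^N are functions on {..<N}.\<close>
definition PhiNH :: "nat \<Rightarrow> (nat \<Rightarrow> real) \<Rightarrow> real \<Rightarrow> real" where
  "PhiNH N x t = (\<Sum>i<N. phiNH (x i) t)"

definition prob_simplex :: "nat \<Rightarrow> (nat \<Rightarrow> real) set" where
  "prob_simplex N = {p. (\<forall>i<N. 0 \<le> p i) \<and> (\<Sum>i<N. p i) = 1}"

end

theory Submission
  imports Defs
begin

lemma exp_quad: fixes x :: real assumes "x \<le> 1" shows "exp x \<le> 1 + x + x^2"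
proof (cases "x \<ge> 0")
  case True thus ?thesis using exp_bound assms by blast
next
  case False
  have "1 - x \<le> exp (-x)" using exp_ge_add_one_self[of "-x"] by simp
  hence "exp x \<le> 1 / (1 - x)" using False
    by (simp add: exp_minus field_simps)
  also have "1 / (1 - x) \<le> 1 + x + x^2"
  proof -
    have "x^3 \<le> 0" using False by (simp add: power_le_zero_eq_numeral)
    moreover have "(1+x+x^2)*(1-x) = 1 - x^3" by (simp add: algebra_simps power2_eq_square power3_eq_cube)
    ultimately have "1 \<le> (1+x+x^2)*(1-x)" by linarith
    thus ?thesis using False by (simp add: divide_le_eq)
  qed
  finally show ?thesis .
qed

lemma lin1: fixes e e2 z A Z U U' W W' :: real
  shows "e - z \<le> A \<Longrightarrow> e2 \<le> (6*Z + 3*(U + W))/4 \<Longrightarrow> U \<le> U' \<Longrightarrow> W \<le> W' \<Longrightarrow> e + e2 - z \<le> A + (6*Z + 3*(U'+W'))/4"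
  by argo

lemma lin2: fixes B2 eps Z w ze :: real
  shows "B2 \<le> eps/4 \<Longrightarrow> Z \<le> w/4 \<Longrightarrow> - eps/96 \<le> ze/3 \<Longrightarrow> 0 \<le> w \<Longrightarrow> 0 \<le> eps \<Longrightarrow>
    B2/2 - w*(128/257) + eps/32 + (6*Z + 3*(B2 * (1/1024) + w * (1/256)))/4 \<le> eps/3 + ze/3"
  by argo

lemma key_poly:
  fixes a u b K M c :: real
  assumes a0: "0 \<le> a" and ub: "\<bar>u\<bar> \<le> b" and b0: "0 < b"
    and aK: "a^2 \<le> K" and M: "K \<le> M" "1 \<le> M"
    and c2: "2 \<le> c" and hb: "256 * c^2 * b^2 * M \<le> 1"
  defines "\<epsilon> \<equiv> 2 * c * b^2"
  defines "E \<equiv> ((a + u)^2 / (2 * (1 + \<epsilon>)) - a^2 / 2)"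
  shows "E + E^2 \<le> a*u + \<epsilon>/3 + a*u*\<epsilon>/3" and "E \<le> 1" and "\<bar>a*u\<bar> \<le> 1/32"
    and "\<epsilon> \<le> 1/256"
proof -
  define z where "z = a*u"
  define w where "w = \<epsilon> * a^2"
  define sg where "sg = 1 + \<epsilon>"
  have eps0: "0 \<le> \<epsilon>" using c2 unfolding \<epsilon>_def by simp
  have u2: "u^2 \<le> b^2" using ub by (metis abs_le_square_iff abs_of_pos b0 )
  have b2K: "b^2 * K \<le> 1/(256*c^2)" 
  proof -
    have "256 * c^2 * b^2 * K \<le> 256 * c^2 * b^2 * M" using M by (intro mult_left_mono) auto
    thus ?thesis using hb c2 by (simp add: field_simps)
  qed
  have b2: "b^2 \<le> 1/(256*c^2)"
  proof -
    have "256 * c^2 * b^2 * 1 \<le> 256 * c^2 * b^2 * M" using M by (intro mult_left_mono) auto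
    thus ?thesis using hb c2 by (simp add: field_simps)
  qed
  have ab2: "a^2*b^2 \<le> 1/(256*c^2)"
    using b2K mult_right_mono[OF aK, of "b^2"] by (simp add: mult.commute)
  have z2: "z^2 \<le> a^2*b^2" unfolding z_def power_mult_distrib using u2 by (rule mult_left_mono) simp
  have c4: "4 \<le> c^2" using power_mono[of 2 c 2] c2 by simp
  have c2inv: "1/(256*c^2) \<le> 1/1024" using c4 by (simp add: divide_simps)
  have zabs: "\<bar>z\<bar> \<le> 1/32"
  proof -
    have "z^2 \<le> 1/1024" using z2 ab2 c2inv by linarith
    hence "z^2 \<le> (1/32)^2" by (simp add: power_divide)
    hence "\<bar>z\<bar>^2 \<le> (1/32)^2" by simp
    thus ?thesis by (rule power2_le_imp_le) simp
  qed
  have epsle: "\<epsilon> \<le> 1/256"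
  proof -
    have "\<epsilon> \<le> 2*c*(1/(256*c^2))" unfolding \<epsilon>_def using b2 c2 by (intro mult_left_mono) auto
    also have "\<dots> = 1/(128*c)" using c2 by (simp add: field_simps power2_eq_square)
    also have "\<dots> \<le> 1/256" using c2 by (simp add: field_simps)
    finally show ?thesis .
  qed
  have w_def2: "w = 2*c*(a^2*b^2)" unfolding w_def \<epsilon>_def by simp
  have w0: "0 \<le> w" unfolding w_def using eps0 by simp
  have wle: "w \<le> 1/256"
  proof -
    have "w \<le> 2*c*(1/(256*c^2))" unfolding w_def2 using ab2 c2 by (intro mult_left_mono) auto
    also have "\<dots> = 1/(128*c)" using c2 by (simp add: field_simps power2_eq_square)
    also have "\<dots> \<le> 1/256" using c2 by (simp add: field_simps)
    finally show ?thesis .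
  qed
  have Eeq: "E = (2*z + u^2 - w) / (2 * sg)"
    unfolding E_def z_def w_def sg_def using eps0 by (simp add: field_simps power2_eq_square)
  have s1: "1 \<le> sg" "sg \<le> 1 + 1/256" unfolding sg_def using eps0 epsle by auto
  have E2: "E^2 \<le> (2*z + u^2 - w)^2 / 4"
  proof -
    have "E^2 = (2*z + u^2 - w)^2 / (4 * sg^2)" unfolding Eeq by (simp add: power_divide power_mult_distrib)
    also have "\<dots> \<le> (2*z + u^2 - w)^2 / 4" using s1 one_le_power[of sg 2] by (intro divide_left_mono) auto
    finally show ?thesis .
  qed
  have sq: "(2*z + u^2 - w)^2 \<le> 6*z^2 + 3*(u^2-w)^2"
  proof -
    have "(2*z + u^2 - w)^2 = 6*z^2 + 3*(u^2-w)^2 - 2*(z - (u^2-w))^2" by (simp add: power2_eq_square algebra_simps)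
    moreover have "0 \<le> (z - (u^2-w))^2" by simp
    ultimately show ?thesis by linarith
  qed
  have sq2: "(u^2-w)^2 \<le> u^2*u^2 + w*w"
  proof -
    have "0 \<le> u^2*w" using w0 by simp
    moreover have "(u^2-w)^2 = u^2*u^2 + w*w - 2*(u^2*w)" by (simp add: power2_eq_square algebra_simps)
    ultimately show ?thesis by linarith
  qed
  have u4: "u^2 * u^2 \<le> b^2 * (1/1024)" using u2 b2 c2inv by (intro mult_mono) auto
  have ww: "w*w \<le> w * (1/256)" using w0 wle by (intro mult_left_mono) auto
  have Ez: "E - z = (u^2 - w - 2*z*\<epsilon>) / (2 * sg)"
    unfolding Eeq sg_def using eps0 by (simp add: field_simps)
  have t1: "u^2/(2 * sg) \<le> b^2/2"
  proof -
    have "u^2/(2 * sg) \<le> u^2/2" using s1 by (intro divide_left_mono) auto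
    thus ?thesis using u2 by linarith
  qed
  have t2: "- w/(2 * sg) \<le> - w*(128/257)"
  proof -
    have "w/(257/128) \<le> w/(2 * sg)" using s1 w0 by (intro divide_left_mono) auto
    thus ?thesis by simp
  qed
  have t3: "- 2*z*\<epsilon>/(2 * sg) \<le> \<epsilon>/32"
  proof -
    have "\<bar>2*z*\<epsilon>/(2 * sg)\<bar> = \<bar>z\<bar>*\<epsilon>/sg" using eps0 s1 by (simp add: abs_mult)
    also have "\<dots> \<le> \<bar>z\<bar>*\<epsilon>/1" using s1 eps0 by (intro divide_left_mono) auto
    also have "\<dots> \<le> 1/32*\<epsilon>" using mult_right_mono[OF zabs eps0] by simp
    finally show ?thesis by linarith
  qed
  have bc: "b^2 \<le> \<epsilon>/4" unfolding \<epsilon>_def using mult_right_mono[OF c2, of "b^2"] by simp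
  have wz: "z^2 \<le> w/4" unfolding w_def2 using z2 mult_right_mono[OF c2, of "a^2*b^2"] by simp
  have zeps: "- \<epsilon>/96 \<le> z*\<epsilon>/3"
  proof -
    have "-1/32 \<le> z" using zabs by linarith
    from mult_right_mono[OF this eps0] show ?thesis by simp
  qed
  have "E - z = u^2/(2 * sg) - w/(2 * sg) - 2*z*\<epsilon>/(2 * sg)" unfolding Ez by (simp add: diff_divide_distrib)
  hence "E - z \<le> b^2/2 - w*(128/257) + \<epsilon>/32" using t1 t2 t3 by simp
  moreover have "E^2 \<le> (6*z^2 + 3*(u^2*u^2 + w*w))/4"
  proof -
    have h3: "6*z^2 + 3*(u^2-w)^2 \<le> 6*z^2 + 3*(u^2*u^2 + w*w)" using sq2 by simp
    have "(2*z + u^2 - w)^2 \<le> 6*z^2 + 3*(u^2*u^2 + w*w)" by (rule order_trans[OF sq h3])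
    from order_trans[OF E2 divide_right_mono[OF this]] show ?thesis by simp
  qed
  ultimately have "E + E^2 - z \<le> b^2/2 - w*(128/257) + \<epsilon>/32 + (6*z^2 + 3*(b^2 * (1/1024) + w * (1/256)))/4"
    using lin1[OF _ _ u4 ww] by blast
  also have "\<dots> \<le> \<epsilon>/3 + z*\<epsilon>/3" using lin2[OF bc wz zeps w0 eps0] by blast
  finally show "E + E^2 \<le> a*u + \<epsilon>/3 + a*u*\<epsilon>/3" unfolding z_def by linarith
  have "2*z + u^2 - w \<le> 2 * sg" using s1 w0 u2 zabs b2 c2inv by linarith
  thus "E \<le> 1" unfolding Eeq using s1 by (simp add: divide_le_eq)
  show "\<bar>a*u\<bar> \<le> 1/32" using zabs z_def by simp
  show "\<epsilon> \<le> 1/256" by (rule epsle)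
qed

lemma powr_neg_half: "0 < (s::real) \<Longrightarrow> s powr (-1/2) = 1 / sqrt s"
proof -
  assume s: "0 < s"
  have e: "(-1/2::real) = -(1/2)" by simp
  have "s powr (-(1/2)) = 1 / s powr (1/2)" by (rule powr_minus_divide)
  also have "s powr (1/2) = sqrt s" using s by (simp add: powr_half_sqrt)
  finally show ?thesis unfolding e .
qed

lemma coord:
  fixes x d t B K c :: real
  assumes x0: "0 \<le> x" and dB: "\<bar>d\<bar> \<le> B" and B0: "0 < B" and t0: "0 < t"
    and xK: "x^2 / t \<le> K" and c2: "2 \<le> c"
    and tbig: "256 * c^2 * B^2 * max K 1 \<le> t"
  shows "phiNH (x + d) (t + 2*c*B^2) \<le> phiNH x t + phiNH x t * (x/t) * d"
proof -
  define r where "r = sqrt t"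
  have r0: "0 < r" using t0 unfolding r_def by simp
  have rr: "r * r = t" using t0 unfolding r_def by simp
  define a where "a = x / r"
  define u where "u = d / r"
  define b where "b = B / r"
  define M where "M = max K 1"
  define \<epsilon> where "\<epsilon> = 2 * c * b^2"
  define E where "E = (a + u)^2 / (2 * (1 + \<epsilon>)) - a^2 / 2"
  have a0: "0 \<le> a" unfolding a_def using x0 r0 by simp
  have r2: "r^2 = t" using t0 unfolding r_def by simp
  have ub: "\<bar>u\<bar> \<le> b"
  proof -
    have "\<bar>u\<bar> = \<bar>d\<bar> / r" unfolding u_def using r0 by simp
    also have "\<dots> \<le> B / r" using dB r0 by (intro divide_right_mono) auto
    finally show ?thesis unfolding b_def .
  qed
  have b0: "0 < b" unfolding b_def using B0 r0 by simp
  have b2: "b^2 = B^2 / t" unfolding b_def r2[symmetric] by (rule power_divide)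
  have a2: "a^2 = x^2 / t" unfolding a_def r2[symmetric] by (rule power_divide)
  have aK: "a^2 \<le> K" using a2 xK by simp
  have hb: "256 * c^2 * b^2 * M \<le> 1" unfolding b2 M_def using tbig t0 by (simp add: field_simps)
  have KM: "K \<le> M" "1 \<le> M" unfolding M_def by auto
  note kp = key_poly[OF a0 ub b0 aK KM c2 hb, folded \<epsilon>_def, folded E_def]
  have eps0: "0 \<le> \<epsilon>" unfolding \<epsilon>_def using c2 by simp
  have z32: "\<bar>a*u\<bar> \<le> 1/32" by (rule kp(3))
  have epsle: "\<epsilon> \<le> 1/256" by (rule kp(4))
  have "exp E \<le> 1 + E + E^2" by (rule exp_quad[OF kp(2)])
  also have "\<dots> \<le> (1 + a*u) * (1 + \<epsilon>/3)"
  proof -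
    have "(1 + a*u) * (1 + \<epsilon>/3) = 1 + (a*u + \<epsilon>/3 + a*u*\<epsilon>/3)" by (simp add: field_simps)
    thus ?thesis using kp(1) by linarith
  qed
  also have "\<dots> \<le> (1 + a*u) * sqrt (1 + \<epsilon>)"
  proof (rule mult_left_mono)
    show "0 \<le> 1 + a*u" using z32 by linarith
    have "(1 + \<epsilon>/3)^2 \<le> 1 + \<epsilon>"
    proof -
      have "\<epsilon> * \<epsilon> \<le> \<epsilon> * 3" using eps0 epsle by (intro mult_left_mono) auto
      thus ?thesis by (simp add: power2_eq_square algebra_simps)
    qed
    thus "1 + \<epsilon>/3 \<le> sqrt (1 + \<epsilon>)" by (rule real_le_rsqrt)
  qed
  finally have main: "exp E \<le> (1 + a*u) * sqrt (1 + \<epsilon>)" .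
  have tD: "t + 2*c*B^2 = t * (1 + \<epsilon>)" unfolding \<epsilon>_def b2 using t0 by (simp add: field_simps)
  have tDpos: "0 < t * (1 + \<epsilon>)" using t0 eps0 by simp
  have sq: "sqrt (t * (1 + \<epsilon>)) = r * sqrt (1 + \<epsilon>)" unfolding r_def by (simp add: real_sqrt_mult)
  have xd: "(x + d)^2 / (2 * (t * (1 + \<epsilon>))) = (a + u)^2 / (2 * (1 + \<epsilon>))"
  proof -
    have "x + d = r * (a + u)" unfolding a_def u_def using r0 by (simp add: field_simps)
    hence "(x + d)^2 = t * (a+u)^2" using rr by (simp add: power_mult_distrib power2_eq_square)
    thus ?thesis using t0 by simp
  qed
  have xx: "x^2 / (2 * t) = a^2 / 2" using a2 by simp
  have zz: "x / t * d = a * u" unfolding a_def u_def using rr[symmetric] by simp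
  have s1: "0 < sqrt (1 + \<epsilon>)" using eps0 by simp
  have "phiNH (x + d) (t + 2*c*B^2) = exp ((a + u)^2 / (2 * (1 + \<epsilon>))) / (r * sqrt (1 + \<epsilon>))"
    unfolding phiNH_def tD powr_neg_half[OF tDpos] sq xd by simp
  also have "exp ((a + u)^2 / (2 * (1 + \<epsilon>))) = exp (a^2/2) * exp E"
    unfolding E_def by (simp add: exp_diff)
  also have "exp (a^2/2) * exp E / (r * sqrt (1 + \<epsilon>)) \<le> exp (a^2/2) * ((1 + a*u) * sqrt (1 + \<epsilon>)) / (r * sqrt (1 + \<epsilon>))"
    using main r0 s1 by (intro divide_right_mono mult_left_mono) auto
  also have "\<dots> = exp (a^2/2) / r * (1 + a*u)" using s1 r0 by (simp add: field_simps)
  also have "\<dots> = phiNH x t + phiNH x t * (x/t) * d"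
  proof -
    have p: "phiNH x t = exp (a^2/2) / r" unfolding phiNH_def powr_neg_half[OF t0] xx r_def by simp
    have "phiNH x t + phiNH x t * (x/t) * d = exp (a^2/2) / r + exp (a^2/2) / r * (x / t * d)"
      unfolding p by (simp add: mult.assoc)
    also have "\<dots> = exp (a^2/2) / r * (1 + a*u)" unfolding zz by (simp add: algebra_simps add_divide_distrib)
    finally show ?thesis by simp
  qed
  finally show ?thesis .
qed

lemma phi_strict_mono: "0 < s1 \<Longrightarrow> s1 < s2 \<Longrightarrow> phiNH y s2 < phiNH y s1"
proof -
  assume s1: "0 < s1" and s12: "s1 < s2"
  have s2: "0 < s2" using s1 s12 by linarith
  have A: "1 / sqrt s2 < 1 / sqrt s1" using s1 s12 by (intro divide_strict_left_mono) auto
  have "y^2 / (2 * s2) \<le> y^2 / (2 * s1)" using s1 s12 by (intro divide_left_mono) auto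
  hence Bx: "exp (y^2 / (2 * s2)) \<le> exp (y^2 / (2 * s1))" by simp
  have "1 / sqrt s2 * exp (y^2 / (2 * s2)) < 1 / sqrt s1 * exp (y^2 / (2 * s2))"
    using A by (intro mult_strict_right_mono) auto
  also have "\<dots> \<le> 1 / sqrt s1 * exp (y^2 / (2 * s1))" using Bx s1 by (intro mult_left_mono) auto
  finally show ?thesis unfolding phiNH_def powr_neg_half[OF s1] powr_neg_half[OF s2] .
qed

lemma phi_deriv: "0 < t \<Longrightarrow> deriv (\<lambda>y. phiNH y t) y = phiNH y t * (y / t)"
proof -
  assume t0: "0 < t"
  have "((\<lambda>y. t powr (-1/2) * exp (y^2 / (2 * t))) has_real_derivative
          t powr (-1/2) * (exp (y^2 / (2 * t)) * (2 * y / (2 * t)))) (at y)"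
    using t0 by (auto intro!: derivative_eq_intros simp: power2_eq_square)
  hence "((\<lambda>y. phiNH y t) has_real_derivative phiNH y t * (y / t)) (at y)"
    unfolding phiNH_def using t0 by (simp add: field_simps)
  thus ?thesis by (rule DERIV_imp_deriv)
qed

theorem lemma6p12:
  fixes N :: nat and x p l :: "nat \<Rightarrow> real" and t dt B K :: real
  assumes "B > 0"
    and "\<forall>i<N. 0 \<le> x i"
    and "t > 0"
    and "p \<in> prob_simplex N"
    and "(\<exists>i<N. deriv (\<lambda>y. phiNH y t) (x i) \<noteq> 0) \<longrightarrow>
           (\<exists>c. \<forall>i<N. p i = c * deriv (\<lambda>y. phiNH y t) (x i))"
    and "\<forall>i<N. \<forall>i'<N. \<bar>l i - l i'\<bar> \<le> B"
    and "dt \<ge> 0"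
    and "PhiNH N (\<lambda>i. x i + ((\<Sum>j<N. p j * l j) - l i)) (t + dt) = PhiNH N x t"
    and "K > 0"
    and "\<forall>i<N. (x i)^2 / t \<le> K"
  shows "t \<ge> 256 * (exp 1)^2 * B^2 * max K 1 \<longrightarrow> dt \<le> 2 * exp 1 * B^2"
proof
  assume tbig: "t \<ge> 256 * (exp 1)^2 * B^2 * max K 1"
  note B0 = assms(1) and x0 = assms(2) and t0 = assms(3) and pS = assms(4) and hprop = assms(5)
    and lB = assms(6) and Phi = assms(8) and xK = assms(10)
  define c where "c = exp (1::real)"
  have c2: "2 \<le> c" unfolding c_def using exp_ge_add_one_self[of 1] by simp
  define S where "S = (\<Sum>j<N. p j * l j)"
  define g where "g = (\<lambda>i. phiNH (x i) t * (x i / t))"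
  have p0: "\<forall>i<N. 0 \<le> p i" and p1: "(\<Sum>i<N. p i) = 1" using pS unfolding prob_simplex_def by auto
  have N0: "N \<noteq> 0" using p1 by (cases N) auto
  have dB: "\<bar>S - l i\<bar> \<le> B" if i: "i < N" for i
  proof -
    have "S - l i = (\<Sum>j<N. p j * (l j - l i))"
      unfolding S_def by (simp add: right_diff_distrib sum_subtractf sum_distrib_right[symmetric] p1)
    also have "\<bar>\<dots>\<bar> \<le> (\<Sum>j<N. \<bar>p j * (l j - l i)\<bar>)" by (rule sum_abs)
    also have "\<dots> \<le> (\<Sum>j<N. p j * B)"
    proof (rule sum_mono)
      fix j assume "j \<in> {..<N}"
      hence j: "j < N" by simp
      have "\<bar>p j * (l j - l i)\<bar> = p j * \<bar>l j - l i\<bar>" using p0 j by (simp add: abs_mult)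
      also have "\<dots> \<le> p j * B" using p0 j lB i by (intro mult_left_mono) auto
      finally show "\<bar>p j * (l j - l i)\<bar> \<le> p j * B" .
    qed
    also have "\<dots> = B" by (simp add: sum_distrib_right[symmetric] p1)
    finally show ?thesis .
  qed
  have gsum: "(\<Sum>i<N. g i * (S - l i)) = 0"
  proof (cases "\<exists>i<N. deriv (\<lambda>y. phiNH y t) (x i) \<noteq> 0")
    case True
    then obtain k where k: "\<forall>i<N. p i = k * g i" using hprop unfolding g_def phi_deriv[OF t0] by blast
    have "k \<noteq> 0"
    proof
      assume "k = 0"
      hence "(\<Sum>i<N. p i) = 0" using k by simp
      thus False using p1 by simp
    qed
    have e0: "(\<Sum>i<N. p i * (S - l i)) = (\<Sum>i<N. p i * S) - (\<Sum>i<N. p i * l i)"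
      by (simp add: right_diff_distrib sum_subtractf)
    have e1: "(\<Sum>i<N. p i * S) = (\<Sum>i<N. p i) * S" by (rule sum_distrib_right[symmetric])
    have e2: "(\<Sum>i<N. p i * l i) = S" unfolding S_def ..
    have "(\<Sum>i<N. p i * (S - l i)) = 0" unfolding e0 e1 e2 p1 by simp
    hence "(\<Sum>i<N. k * (g i * (S - l i))) = 0" using k by (simp add: mult.assoc)
    hence "k * (\<Sum>i<N. g i * (S - l i)) = 0" by (simp add: sum_distrib_left)
    thus ?thesis using \<open>k \<noteq> 0\<close> by simp
  next
    case False
    hence "\<forall>i<N. g i = 0" unfolding g_def phi_deriv[OF t0] by auto
    thus ?thesis by simp
  qed
  show "dt \<le> 2 * exp 1 * B^2"
  proof (rule ccontr)
    assume "\<not> dt \<le> 2 * exp 1 * B^2"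
    hence dtD: "t + 2*c*B^2 < t + dt" unfolding c_def by simp
    have D0: "0 < t + 2*c*B^2" using t0 c2 by (simp add: add_pos_nonneg)
    have "PhiNH N (\<lambda>i. x i + (S - l i)) (t + dt) < (\<Sum>i<N. phiNH (x i + (S - l i)) (t + 2*c*B^2))"
      unfolding PhiNH_def
      by (rule sum_strict_mono) (use N0 phi_strict_mono[OF D0 dtD] in auto)
    also have "\<dots> \<le> (\<Sum>i<N. phiNH (x i) t + g i * (S - l i))"
    proof (rule sum_mono)
      fix i assume "i \<in> {..<N}"
      hence i: "i < N" by simp
      have "phiNH (x i + (S - l i)) (t + 2*c*B^2) \<le> phiNH (x i) t + phiNH (x i) t * (x i / t) * (S - l i)"
        by (rule coord[OF _ dB[OF i] B0 t0 _ c2]) (use x0 xK i tbig c_def in auto)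
      thus "phiNH (x i + (S - l i)) (t + 2*c*B^2) \<le> phiNH (x i) t + g i * (S - l i)"
        unfolding g_def by simp
    qed
    also have "\<dots> = PhiNH N x t" unfolding PhiNH_def sum.distrib gsum by simp
    finally show False using Phi unfolding S_def by simp
  qed
qed

end
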